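(* Let $d\ge 2$, $n\ge 2$, and let $\mathcal G=(\mathcal V,\mathcal E)$ be an undirected graph on $\{1,\dots,n\}$ with $m$ edges, an arbitrary orientation with incidence matrix $H$, and $\bar H=H\otimes I_d$. Let $p(t)\in\mathbb R^{dn}$ be a configuration with $\dot p_i=v_i$, the velocities $v_i$ bounded and known, and bearings $g_k(t)=e_k(t)/\|e_k(t)\|$ ($e=\bar Hp$, $e_k\neq0$) measured. If the formation $\mathcal G(p(t))$ is relaxed bearing rigid, then $p(t)$ can be recovered up to a translational vector in $\mathbb R^d$: there is an estimator, driven only by the bearings $g_k(t)$ and velocities $v_i(t)$ and started from arbitrary initial conditions, whose estimate $\hat p(t)$ converges uniformly globally exponentially to $p(t)+1_n\otimes c$ for some constant $c\in\mathbb R^d$.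
   Context: For $y\in\mathbb S^{d-1}$, $\pi_y:=I_d-yy^\top$; $\Pi(t)=\mathrm{blkdiag}(\pi_{g_1(t)},\dots,\pi_{g_m(t)})$; $L=\bar H^\top\bar H$; $L_B(t)=\bar H^\top\Pi(t)\bar H$. $L_B$ is PE if there exist $T,\mu>0$ with $\int_t^{t+T}L_B(\tau)d\tau\ge\mu L$ for all $t$. The formation is bearing persistently exciting (BPE) if $\mathcal G$ has a spanning tree and $L_B$ is PE. The formation is relaxed bearing rigid if it is BPE and its motion is a (time-varying) similarity transformation of an initial configuration, i.e. $p_i(t)=s(t)R(t)^\top p_i(0)+b(t)$ for all $i$ with $s(t)>0$, $R(t)$ a rotation, $b(t)\in\mathbb R^d$. *)

theory Defs
  imports "HOL-Analysis.Analysis"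
begin

(* Conventions.
   Agents are indexed by a finite type 'n (so n = CARD('n)), space dimension by a
   finite type 'd (d = CARD('d)), edges by a finite type 'm (m = CARD('m)).
   A stacked configuration p \<in> R^{dn} is a vector of type real^('n \<times> 'd):
   p $ (i,a) is the a-th coordinate of agent i.  Similarly R^{dm} = real^('m \<times> 'd).
   The (undirected, simple) graph with an arbitrary orientation is given by
   tail/head maps src, dst :: 'm \<Rightarrow> 'n: edge k joins src k and dst k,
   oriented from src k to dst k. *)

definition simple_undirected_graph :: "('m::finite \<Rightarrow> 'n::finite) \<Rightarrow> ('m \<Rightarrow> 'n) \<Rightarrow> bool" where
  "simple_undirected_graph src dst \<longleftrightarrow>
     (\<forall>k. src k \<noteq> dst k) \<and>
     (\<forall>k l. {src k, dst k} = {src l, dst l} \<longrightarrow> k = l)"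

text \<open>Incidence matrix H (m x n) of the orientation: row k has -1 at the tail, +1 at the head,
  so that e_k = p_(dst k) - p_(src k).\<close>
definition incidence :: "('m::finite \<Rightarrow> 'n::finite) \<Rightarrow> ('m \<Rightarrow> 'n) \<Rightarrow> real^'n^'m" where
  "incidence src dst = (\<chi> k i. if i = dst k then 1 else if i = src k then -1 else 0)"

text \<open>Kronecker product A \<otimes> I_d.\<close>
definition kron_id :: "real^'n::finite^'m::finite \<Rightarrow> real^('n \<times> 'd::finite)^('m \<times> 'd)" where
  "kron_id A = (\<chi> ka ib. A $ fst ka $ fst ib * (if snd ka = snd ib then 1 else 0))"

definition Hbar :: "('m::finite \<Rightarrow> 'n::finite) \<Rightarrow> ('m \<Rightarrow> 'n) \<Rightarrow> real^('n \<times> 'd::finite)^('m \<times> 'd)" where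
  "Hbar src dst = kron_id (incidence src dst)"

text \<open>Laplacian L = Hbar^T Hbar.\<close>
definition Lap :: "('m::finite \<Rightarrow> 'n::finite) \<Rightarrow> ('m \<Rightarrow> 'n) \<Rightarrow> real^('n \<times> 'd::finite)^('n \<times> 'd)" where
  "Lap src dst = transpose (Hbar src dst) ** Hbar src dst"

text \<open>Orthogonal projection pi_y = I_d - y y^T.\<close>
definition proj_perp :: "real^'d::finite \<Rightarrow> real^'d^'d" where
  "proj_perp y = mat 1 - (\<chi> a b. y $ a * y $ b)"

text \<open>Block diagonal matrix blkdiag(pi_{g_1},...,pi_{g_m}).\<close>
definition Pi_blk :: "real^'d::finite^'m::finite \<Rightarrow> real^('m \<times> 'd)^('m \<times> 'd)" where
  "Pi_blk g = (\<chi> ka lb. if fst ka = fst lb then proj_perp (g $ fst ka) $ snd ka $ snd lb else 0)"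

text \<open>Bearing Laplacian L_B = Hbar^T Pi Hbar.\<close>
definition bearing_Lap :: "('m::finite \<Rightarrow> 'n::finite) \<Rightarrow> ('m \<Rightarrow> 'n) \<Rightarrow> real^'d::finite^'m \<Rightarrow> real^('n \<times> 'd)^('n \<times> 'd)" where
  "bearing_Lap src dst g = transpose (Hbar src dst) ** Pi_blk g ** Hbar src dst"

text \<open>Edge vectors e = Hbar p, the k-th block e_k, and bearings g_k = e_k / |e_k|.\<close>
definition edge_vec :: "('m::finite \<Rightarrow> 'n::finite) \<Rightarrow> ('m \<Rightarrow> 'n) \<Rightarrow> real^('n \<times> 'd::finite) \<Rightarrow> real^'d^'m" where
  "edge_vec src dst p = (\<chi> k a. (Hbar src dst *v p) $ (k,a))"

definition bearings :: "('m::finite \<Rightarrow> 'n::finite) \<Rightarrow> ('m \<Rightarrow> 'n) \<Rightarrow> real^('n \<times> 'd::finite) \<Rightarrow> real^'d^'m" where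
  "bearings src dst p = (\<chi> k. (1 / norm (edge_vec src dst p $ k)) *\<^sub>R edge_vec src dst p $ k)"

text \<open>Loewner order on square matrices: A \<le> B iff B - A is positive semidefinite.\<close>
definition loewner_le :: "real^'k::finite^'k \<Rightarrow> real^'k^'k \<Rightarrow> bool" where
  "loewner_le A B \<longleftrightarrow> (\<forall>x. 0 \<le> x \<bullet> ((B - A) *v x))"

text \<open>Spanning tree: a set of n-1 edges connecting all vertices.\<close>
definition connects :: "('m::finite \<Rightarrow> 'n::finite) \<Rightarrow> ('m \<Rightarrow> 'n) \<Rightarrow> 'm set \<Rightarrow> bool" where
  "connects src dst S \<longleftrightarrow>
     (\<forall>i j. (i, j) \<in> ({(src k, dst k) | k. k \<in> S} \<union> {(dst k, src k) | k. k \<in> S})\<^sup>*)"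

definition has_spanning_tree :: "('m::finite \<Rightarrow> 'n::finite) \<Rightarrow> ('m \<Rightarrow> 'n) \<Rightarrow> bool" where
  "has_spanning_tree src dst \<longleftrightarrow>
     (\<exists>S. card S = CARD('n) - 1 \<and> connects src dst S)"

text \<open>L_B is persistently exciting (on the time axis t \<ge> 0).\<close>
definition bearing_PE :: "('m::finite \<Rightarrow> 'n::finite) \<Rightarrow> ('m \<Rightarrow> 'n) \<Rightarrow> (real \<Rightarrow> real^('n \<times> 'd::finite)) \<Rightarrow> bool" where
  "bearing_PE src dst p \<longleftrightarrow>
     (\<exists>T \<mu>. T > 0 \<and> \<mu> > 0 \<and>
        (\<forall>t\<ge>0. loewner_le (\<mu> *\<^sub>R Lap src dst)
                  (integral {t..t+T} (\<lambda>\<tau>. bearing_Lap src dst (bearings src dst (p \<tau>))))))"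

definition BPE :: "('m::finite \<Rightarrow> 'n::finite) \<Rightarrow> ('m \<Rightarrow> 'n) \<Rightarrow> (real \<Rightarrow> real^('n \<times> 'd::finite)) \<Rightarrow> bool" where
  "BPE src dst p \<longleftrightarrow> has_spanning_tree src dst \<and> bearing_PE src dst p"

text \<open>Agent i's position p_i in R^d from the stacked vector.\<close>
definition agent :: "real^('n::finite \<times> 'd::finite) \<Rightarrow> 'n \<Rightarrow> real^'d" where
  "agent p i = (\<chi> a. p $ (i,a))"

text \<open>1_n \<otimes> c.\<close>
definition ones_kron :: "real^'d::finite \<Rightarrow> real^('n::finite \<times> 'd)" where
  "ones_kron c = (\<chi> ia. c $ snd ia)"

definition relaxed_bearing_rigid ::
  "('m::finite \<Rightarrow> 'n::finite) \<Rightarrow> ('m \<Rightarrow> 'n) \<Rightarrow> (real \<Rightarrow> real^('n \<times> 'd::finite)) \<Rightarrow> bool" where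
  "relaxed_bearing_rigid src dst p \<longleftrightarrow>
     BPE src dst p \<and>
     (\<exists>s R b. \<forall>t\<ge>0. s t > 0 \<and> rotation_matrix (R t) \<and>
        (\<forall>i. agent (p t) i = s t *\<^sub>R (transpose (R t) *v agent (p 0) i) + b t))"

end

theory Submission
  imports Defs
begin
lemma mat_bound:
  fixes A :: "real^'n::finite^'m::finite"
  shows "norm (A *v x) \<le> real CARD('m) * real CARD('n) * norm A * norm x"
proof -
  have "onorm ((*v) A) \<le> real CARD('m) * real CARD('n) * norm A"
    by (rule onorm_le_matrix_component) (rule order_trans[OF component_le_norm_cart Finite_Cartesian_Product.norm_nth_le])
  moreover have "norm (A *v x) \<le> onorm ((*v) A) * norm x"
    by (rule onorm) simp
  ultimately show ?thesis
    by (meson mult_right_mono norm_ge_zero order_trans)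
qed

lemma bb_mv: "bounded_bilinear (\<lambda>(A::real^'n::finite^'m::finite) x. A *v x)"
proof
  fix a a' :: "real^'n^'m" and b b' :: "real^'n" and r :: real
  show "(a + a') *v b = a *v b + a' *v b" by (rule matrix_vector_mult_add_rdistrib)
  show "a *v (b + b') = a *v b + a *v b'" by (rule matrix_vector_right_distrib)
  show "(r *\<^sub>R a) *v b = r *\<^sub>R (a *v b)" by (rule scaleR_matrix_vector_assoc[symmetric])
  show "a *v (r *\<^sub>R b) = r *\<^sub>R (a *v b)" by (rule matrix_vector_mult_scaleR)
next
  show "\<exists>K. \<forall>(a::real^'n^'m) (b::real^'n). norm (a *v b) \<le> norm a * norm b * K"
  proof (rule exI[of _ "real CARD('m) * real CARD('n)"], intro allI)
    fix a :: "real^'n^'m" and b :: "real^'n"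
    show "norm (a *v b) \<le> norm a * norm b * (real CARD('m) * real CARD('n))"
      using mat_bound[of a b] by (simp add: mult_ac)
  qed
qed

lemma cont_mv:
  fixes A :: "real \<Rightarrow> real^'k::finite^'j::finite"
  shows "continuous_on S A \<Longrightarrow> continuous_on S y \<Longrightarrow> continuous_on S (\<lambda>s. A s *v y s)"
  using bounded_bilinear.continuous_on[OF bb_mv, of S A y] by simp

primrec picard :: "(real \<Rightarrow> real^'k::finite^'k) \<Rightarrow> real \<Rightarrow> real^'k \<Rightarrow> nat \<Rightarrow> real \<Rightarrow> real^'k" where
  "picard A t0 x0 0 = (\<lambda>t. x0)"
| "picard A t0 x0 (Suc n) = (\<lambda>t. x0 + integral {t0..t} (\<lambda>s. A s *v picard A t0 x0 n s))"

lemma integral_pow_shift: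
  fixes t0 t :: real assumes "t0 \<le> t"
  shows "((\<lambda>s. (s - t0)^k) has_integral (t - t0)^(Suc k) / real (Suc k)) {t0..t}"
proof -
  have "((\<lambda>s. (s - t0)^k) has_integral ((t - t0)^(Suc k) / real (Suc k) - (t0 - t0)^(Suc k)/real (Suc k))) {t0..t}"
  proof (rule fundamental_theorem_of_calculus[OF assms])
    fix x assume "x \<in> {t0..t}"
    have "((\<lambda>s. (s - t0)^(Suc k) / real (Suc k)) has_real_derivative (real (Suc k) * (x - t0)^k * 1 / real (Suc k))) (at x within {t0..t})"
      by (intro derivative_eq_intros) auto
    then show "((\<lambda>s. (s - t0)^(Suc k) / real (Suc k)) has_vector_derivative (x - t0)^k) (at x within {t0..t})"
      by (simp add: has_real_derivative_iff_has_vector_derivative)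
  qed
  then show ?thesis by simp
qed

lemma picard_cont:
  fixes A :: "real \<Rightarrow> real^'k::finite^'k"
  assumes "continuous_on {t0..N} A"
  shows "continuous_on {t0..N} (picard A t0 x0 n)"
proof (induction n)
  case 0 then show ?case by simp
next
  case (Suc n)
  have "continuous_on {t0..N} (\<lambda>s. A s *v picard A t0 x0 n s)"
    using cont_mv[OF assms Suc] .
  then have "(\<lambda>s. A s *v picard A t0 x0 n s) integrable_on {t0..N}"
    by (rule integrable_continuous_real)
  then have "continuous_on {t0..N} (\<lambda>t. integral {t0..t} (\<lambda>s. A s *v picard A t0 x0 n s))"
    by (rule indefinite_integral_continuous_1)
  then show ?case by (simp add: continuous_on_add)
qed

lemma alg_fact: fixes M u r :: real shows "(M * r * M^(Suc n) / fact (Suc n)) * (u^(Suc (Suc n)) / real (Suc (Suc n))) = r * (M * u)^(Suc (Suc n)) / fact (Suc (Suc n))"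
proof -
  have f: "(fact (Suc (Suc n)) :: real) = real (Suc (Suc n)) * fact (Suc n)" by (simp only: fact_Suc[of "Suc n"])
  show ?thesis unfolding f power_mult_distrib by (simp add: field_simps)
qed

lemma picard_diff_bound:
  fixes A :: "real \<Rightarrow> real^'k::finite^'k"
  assumes cA: "continuous_on {t0..N} A"
    and M: "\<And>s y. s \<in> {t0..N} \<Longrightarrow> norm (A s *v y) \<le> M * norm y" and M0: "0 \<le> M"
  shows "t \<in> {t0..N} \<Longrightarrow> norm (picard A t0 x0 (Suc n) t - picard A t0 x0 n t)
           \<le> norm x0 * (M * (t - t0))^(Suc n) / fact (Suc n)"
proof (induction n arbitrary: t)
  have intg: "(\<lambda>s. A s *v y s) integrable_on {t0..t}"
    if "continuous_on {t0..N} y" "t \<in> {t0..N}" for y t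
    by (rule integrable_continuous_real, rule continuous_on_subset[OF cont_mv[OF cA that(1)]]) (use that in auto)
  {
    case 0
    have "norm (integral {t0..t} (\<lambda>s. A s *v x0)) \<le> integral {t0..t} (\<lambda>s. M * norm x0)"
      by (rule integral_norm_bound_integral) (use 0 M intg[of "\<lambda>s. x0"] in auto)
    then show ?case using 0 by (simp add: mult_ac)
  next
    case (Suc n)
    let ?d = "\<lambda>s. picard A t0 x0 (Suc n) s - picard A t0 x0 n s"
    have c1: "continuous_on {t0..N} (picard A t0 x0 (Suc n))" "continuous_on {t0..N} (picard A t0 x0 n)"
      by (rule picard_cont[OF cA])+
    have eq: "picard A t0 x0 (Suc (Suc n)) t - picard A t0 x0 (Suc n) t
        = integral {t0..t} (\<lambda>s. A s *v ?d s)"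
      using integral_diff[OF intg[OF c1(1) Suc.prems] intg[OF c1(2) Suc.prems]]
      by (simp add: matrix_vector_mult_diff_distrib)
    define c where "c = M * norm x0 * M^(Suc n) / fact (Suc n)"
    have hi: "((\<lambda>s. c * (s - t0)^(Suc n)) has_integral c * ((t - t0)^(Suc (Suc n)) / real (Suc (Suc n)))) {t0..t}"
      by (rule has_integral_mult_right, rule integral_pow_shift) (use Suc.prems in auto)
    have "norm (integral {t0..t} (\<lambda>s. A s *v ?d s)) \<le> integral {t0..t} (\<lambda>s. c * (s - t0)^(Suc n))"
    proof (rule integral_norm_bound_integral)
      show "(\<lambda>s. A s *v ?d s) integrable_on {t0..t}"
        by (rule intg) (use c1 Suc.prems in \<open>auto intro!: continuous_on_diff\<close>)
      show "(\<lambda>s. c * (s - t0)^(Suc n)) integrable_on {t0..t}" using hi by blast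
    next
      fix s assume s: "s \<in> {t0..t}"
      then have sN: "s \<in> {t0..N}" using Suc.prems by auto
      have "norm (A s *v ?d s) \<le> M * norm (?d s)" using M[OF sN] .
      also have "\<dots> \<le> M * (norm x0 * (M * (s - t0))^(Suc n) / fact (Suc n))"
        by (rule mult_left_mono[OF Suc.IH[OF sN] M0])
      also have "\<dots> = c * (s - t0)^(Suc n)" by (simp add: c_def power_mult_distrib)
      finally show "norm (A s *v ?d s) \<le> c * (s - t0)^(Suc n)" .
    qed
    also have "\<dots> = c * ((t - t0)^(Suc (Suc n)) / real (Suc (Suc n)))" using hi by (rule integral_unique)
    also have "\<dots> = norm x0 * (M * (t - t0))^(Suc (Suc n)) / fact (Suc (Suc n))"
      unfolding c_def by (rule alg_fact)
    finally show ?case using eq by simp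
  }
qed

lemma linear_ode_exists:
  fixes A :: "real \<Rightarrow> real^'k::finite^'k"
  assumes cA: "continuous_on {t0..} A"
  shows "\<exists>x. x t0 = x0 \<and> (\<forall>t\<ge>t0. (x has_vector_derivative A t *v x t) (at t within {t0..}))"
proof -
  define P where "P = picard A t0 x0"
  define X where "X = (\<lambda>t. x0 + (\<Sum>i. P (Suc i) t - P i t))"
  have P0: "P n t0 = x0" for n by (cases n) (simp_all add: P_def)
  have X0: "X t0 = x0" by (simp add: X_def P0)
  have key: "continuous_on {t0..N} X \<and> (\<forall>t\<in>{t0..N}. X t = x0 + integral {t0..t} (\<lambda>s. A s *v X s))"
    if N: "t0 \<le> N" for N
  proof -
    have cAN: "continuous_on {t0..N} A" by (rule continuous_on_subset[OF cA]) auto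
    have "bounded (A ` {t0..N})" by (rule compact_imp_bounded, rule compact_continuous_image[OF cAN]) simp
    then obtain B where B: "\<And>s. s \<in> {t0..N} \<Longrightarrow> norm (A s) \<le> B" unfolding bounded_iff by blast
    define M where "M = real CARD('k) * real CARD('k) * max B 0"
    have M0: "0 \<le> M" by (simp add: M_def)
    have Mb: "norm (A s *v y) \<le> M * norm y" if s: "s \<in> {t0..N}" for s y
    proof -
      have "norm (A s *v y) \<le> real CARD('k) * real CARD('k) * norm (A s) * norm y" by (rule mat_bound)
      also have "\<dots> \<le> M * norm y" unfolding M_def
        by (intro mult_right_mono mult_left_mono) (use B[OF s] in auto)
      finally show ?thesis .
    qed
    have bnd: "norm (P (Suc n) t - P n t) \<le> norm x0 * (M*(N-t0))^(Suc n)/fact(Suc n)"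
      if t: "t \<in> {t0..N}" for n t
    proof -
      have "norm (P (Suc n) t - P n t) \<le> norm x0 * (M * (t - t0))^(Suc n) / fact (Suc n)"
        unfolding P_def by (rule picard_diff_bound[OF cAN Mb M0 t])
      also have "\<dots> \<le> norm x0 * (M*(N-t0))^(Suc n)/fact(Suc n)"
        by (intro divide_right_mono mult_left_mono power_mono mult_left_mono) (use t M0 in auto)
      finally show ?thesis .
    qed
    have "summable (\<lambda>n. inverse (fact n) * (M*(N-t0))^n)" by (rule summable_exp)
    then have "summable (\<lambda>n. (M*(N-t0))^n / fact n)" by (simp add: divide_inverse mult.commute)
    then have "summable (\<lambda>n. (M*(N-t0))^(Suc n) / fact (Suc n))" by (subst summable_Suc_iff)
    then have summ: "summable (\<lambda>n. norm x0 * (M*(N-t0))^(Suc n)/fact(Suc n))"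
      using summable_mult[of "\<lambda>n. (M*(N-t0))^(Suc n) / fact (Suc n)" "norm x0"] by (simp only: times_divide_eq_right)
    have ul0: "uniform_limit {t0..N} (\<lambda>n t. \<Sum>i<n. P (Suc i) t - P i t) (\<lambda>t. \<Sum>i. P (Suc i) t - P i t) sequentially"
      by (rule Weierstrass_m_test[OF bnd summ])
    have tel: "P n t = x0 + (\<Sum>i<n. P (Suc i) t - P i t)" for n t
      by (subst sum_lessThan_telescope) (simp add: P_def)
    have dd: "dist (P n t) (X t) = dist (\<Sum>i<n. P (Suc i) t - P i t) (\<Sum>i. P (Suc i) t - P i t)" for n t
      by (simp only: X_def tel[of n t] dist_add_cancel)
    have ul: "uniform_limit {t0..N} P X sequentially"
      using ul0 unfolding uniform_limit_iff dd .
    have cP: "continuous_on {t0..N} (P n)" for n unfolding P_def by (rule picard_cont[OF cAN])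
    have cX: "continuous_on {t0..N} X"
      by (rule uniform_limit_theorem[OF _ ul]) (simp_all add: cP)
    have intX: "X t = x0 + integral {t0..t} (\<lambda>s. A s *v X s)" if t: "t \<in> {t0..N}" for t
    proof -
      have sub: "{t0..t} \<subseteq> {t0..N}" using t by auto
      have ult: "uniform_limit {t0..t} (\<lambda>n s. A s *v P n s) (\<lambda>s. A s *v X s) sequentially"
      proof (rule uniform_limitI)
        fix e :: real assume e: "e > 0"
        then have "e / (M + 1) > 0" using M0 by simp
        with ul have "\<forall>\<^sub>F n in sequentially. \<forall>s\<in>{t0..N}. dist (P n s) (X s) < e / (M + 1)"
          unfolding uniform_limit_iff by blast
        then show "\<forall>\<^sub>F n in sequentially. \<forall>s\<in>{t0..t}. dist (A s *v P n s) (A s *v X s) < e"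
        proof (rule eventually_mono)
          fix n assume H: "\<forall>s\<in>{t0..N}. dist (P n s) (X s) < e / (M + 1)"
          show "\<forall>s\<in>{t0..t}. dist (A s *v P n s) (A s *v X s) < e"
          proof
            fix s assume s: "s \<in> {t0..t}"
            then have sN: "s \<in> {t0..N}" using sub by auto
            have "dist (A s *v P n s) (A s *v X s) = norm (A s *v (P n s - X s))"
              by (simp add: dist_norm matrix_vector_mult_diff_distrib)
            also have "\<dots> \<le> M * norm (P n s - X s)" by (rule Mb[OF sN])
            also have "\<dots> \<le> M * (e / (M + 1))"
              using H sN M0 by (intro mult_left_mono) (auto simp: dist_norm less_imp_le)
            also have "\<dots> < e" using e M0 by (simp add: field_simps)
            finally show "dist (A s *v P n s) (A s *v X s) < e" .
          qed
        qed
      qed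
      obtain I J where I: "\<And>n. ((\<lambda>s. A s *v P n s) has_integral I n) {t0..t}"
        and J: "((\<lambda>s. A s *v X s) has_integral J) {t0..t}" and IJ: "I \<longlonglongrightarrow> J"
        by (rule uniform_limit_integral[OF ult]) (auto intro!: cont_mv continuous_on_subset[OF cAN sub] continuous_on_subset[OF cP sub])
      have "(\<lambda>n. P n t) \<longlonglongrightarrow> X t" by (rule tendsto_uniform_limitI[OF ul t])
      then have L1: "(\<lambda>n. P (Suc n) t) \<longlonglongrightarrow> X t" by (rule LIMSEQ_Suc)
      have "P (Suc n) t = x0 + I n" for n using integral_unique[OF I[of n]] by (simp add: P_def)
      then have L2: "(\<lambda>n. P (Suc n) t) \<longlonglongrightarrow> x0 + J" by (simp add: tendsto_add IJ)
      have "X t = x0 + J" using LIMSEQ_unique[OF L1 L2] .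
      then show ?thesis using integral_unique[OF J] by simp
    qed
    show ?thesis using cX intX by blast
  qed
  have "(X has_vector_derivative A t *v X t) (at t within {t0..})" if t: "t \<ge> t0" for t
  proof -
    define N where "N = t + 1"
    have N: "t0 \<le> N" "t \<in> {t0..N}" using t by (auto simp: N_def)
    note K = key[OF N(1)]
    have cf: "continuous_on {t0..N} (\<lambda>s. A s *v X s)"
      using K by (intro cont_mv continuous_on_subset[OF cA]) auto
    have "((\<lambda>u. integral {t0..u} (\<lambda>s. A s *v X s)) has_vector_derivative A t *v X t) (at t within {t0..N})"
      by (rule integral_has_vector_derivative[OF cf N(2)])
    then have "((\<lambda>u. x0 + integral {t0..u} (\<lambda>s. A s *v X s)) has_vector_derivative A t *v X t) (at t within {t0..N})"
      using has_vector_derivative_add[OF has_vector_derivative_const] by fastforce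
    then have "(X has_vector_derivative A t *v X t) (at t within {t0..N})"
      by (rule has_vector_derivative_transform[OF N(2), rotated]) (use K in auto)
    moreover have "at t within {t0..N} = at t within {t0..}"
      by (rule at_within_nhd[where S="{..<N}"]) (auto simp: N_def)
    ultimately show ?thesis by simp
  qed
  then show ?thesis using X0 by blast
qed

lemma sum_prod_UNIV: "(\<Sum>ij\<in>(UNIV::('a::finite\<times>'b::finite) set). f ij) = (\<Sum>i\<in>UNIV. \<Sum>j\<in>UNIV. f (i, j))"
  by (simp add: sum.cartesian_product)

definition blk :: "real^('m::finite \<times> 'd::finite) \<Rightarrow> 'm \<Rightarrow> real^'d" where
  "blk y k = (\<chi> a. y $ (k, a))"

lemma inner_blocks: "(y::real^('m::finite \<times> 'd::finite)) \<bullet> z = (\<Sum>k\<in>UNIV. blk y k \<bullet> blk z k)"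
  by (simp add: inner_vec_def sum_prod_UNIV blk_def)

lemma Hbar_mv:
  fixes x :: "real^('n::finite \<times> 'd::finite)" and src dst :: "'m::finite \<Rightarrow> 'n"
  assumes "src k \<noteq> dst k"
  shows "(Hbar src dst *v x) $ (k,a) = x $ (dst k, a) - x $ (src k, a)"
proof -
  have "(Hbar src dst *v x) $ (k,a) = (\<Sum>i\<in>UNIV. \<Sum>b\<in>UNIV. (if i = dst k then 1 else if i = src k then -1 else 0) * (if a = b then 1 else 0) * x $ (i,b))"
    by (simp add: Hbar_def kron_id_def incidence_def matrix_vector_mult_def sum_prod_UNIV cong: if_cong)
  also have "\<dots> = (\<Sum>i\<in>UNIV. (if i = dst k then x$(i,a) else 0) - (if i = src k then x$(i,a) else 0))"
  proof (rule sum.cong[OF refl])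
    fix i
    have "(\<Sum>b\<in>UNIV. (if i = dst k then 1 else if i = src k then -1 else 0) * (if a = b then 1 else 0) * x $ (i,b))
        = (\<Sum>b\<in>UNIV. if a = b then (if i = dst k then 1 else if i = src k then -1 else 0) * x $ (i,b) else 0)"
      by (rule sum.cong) auto
    also have "\<dots> = (if i = dst k then 1 else if i = src k then -1 else 0) * x $ (i,a)" by simp
    also have "\<dots> = (if i = dst k then x$(i,a) else 0) - (if i = src k then x$(i,a) else 0)"
      using assms by auto
    finally show "(\<Sum>b\<in>UNIV. (if i = dst k then 1 else if i = src k then -1 else 0) * (if a = b then 1 else 0) * x $ (i,b))
       = (if i = dst k then x$(i,a) else 0) - (if i = src k then x$(i,a) else 0)" .
  qed
  also have "\<dots> = x $ (dst k, a) - x $ (src k, a)" by (simp add: sum_subtractf)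
  finally show ?thesis .
qed

definition pperp :: "real^'d::finite \<Rightarrow> real^'d \<Rightarrow> real^'d" where
  "pperp g u = u - (g \<bullet> u) *\<^sub>R g"

lemma blk_Pi: "blk (Pi_blk g *v y) k = pperp (g $ k) (blk y k)"
proof -
  have "(Pi_blk g *v y) $ (k, a) = (\<Sum>b\<in>UNIV. ((if a = b then 1 else 0) - g$k$a * g$k$b) * y $ (k,b))" for a
  proof -
    have "(Pi_blk g *v y) $ (k, a) = (\<Sum>l\<in>UNIV. \<Sum>b\<in>UNIV. (if k = l then ((if a = b then 1 else 0) - g$k$a * g$k$b) else 0) * y $ (l,b))"
      by (simp add: Pi_blk_def matrix_vector_mult_def sum_prod_UNIV proj_perp_def mat_def cong: if_cong)
    also have "\<dots> = (\<Sum>l\<in>UNIV. if k = l then (\<Sum>b\<in>UNIV. ((if a = b then 1 else 0) - g$k$a * g$k$b) * y $ (l,b)) else 0)"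
      by (rule sum.cong) auto
    finally show ?thesis by simp
  qed
  moreover have "(\<Sum>b\<in>UNIV. ((if a = b then 1 else 0) - g$k$a * g$k$b) * y $ (k,b)) = (pperp (g$k) (blk y k)) $ a" for a
  proof -
    have "(\<Sum>b\<in>UNIV. ((if a = b then 1 else 0) - g$k$a * g$k$b) * y $ (k,b))
        = (\<Sum>b\<in>UNIV. (if a = b then y$(k,b) else 0)) - (\<Sum>b\<in>UNIV. g$k$a * (g$k$b * y$(k,b)))"
      by (subst sum_subtractf[symmetric]) (rule sum.cong, auto simp: algebra_simps)
    also have "\<dots> = y$(k,a) - g$k$a * (\<Sum>b\<in>UNIV. g$k$b * y$(k,b))" by (simp add: sum_distrib_left)
    also have "\<dots> = (pperp (g$k) (blk y k)) $ a" by (simp add: pperp_def blk_def inner_vec_def mult.commute)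
    finally show ?thesis .
  qed
  ultimately show ?thesis by (simp add: blk_def vec_eq_iff)
qed

lemma pperp_props:
  fixes g u :: "real^'d::finite"
  assumes "norm g = 1"
  shows "u \<bullet> pperp g u = pperp g u \<bullet> pperp g u" "pperp g u \<bullet> pperp g u \<le> u \<bullet> u"
proof -
  have gg: "g \<bullet> g = 1" using assms by (simp add: norm_eq_sqrt_inner)
  have a: "u \<bullet> pperp g u = u \<bullet> u - (g \<bullet> u)^2"
    by (simp add: pperp_def inner_diff_right power2_eq_square inner_commute)
  have b: "pperp g u \<bullet> pperp g u = u \<bullet> u - (g \<bullet> u)^2"
    by (simp add: pperp_def inner_diff_right inner_diff_left power2_eq_square inner_commute gg algebra_simps)
  show "u \<bullet> pperp g u = pperp g u \<bullet> pperp g u" using a b by simp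
  show "pperp g u \<bullet> pperp g u \<le> u \<bullet> u" using b by simp
qed

lemma Pi_props:
  fixes g :: "real^'d::finite^'m::finite"
  assumes "\<And>k. norm (g $ k) = 1"
  shows "y \<bullet> (Pi_blk g *v y) = (norm (Pi_blk g *v y))^2" "norm (Pi_blk g *v y) \<le> norm y"
proof -
  show "y \<bullet> (Pi_blk g *v y) = (norm (Pi_blk g *v y))^2"
    unfolding power2_norm_eq_inner inner_blocks[of y] inner_blocks[of "Pi_blk g *v y"] blk_Pi
    using pperp_props(1)[OF assms] by simp
  have "(norm (Pi_blk g *v y))^2 \<le> (norm y)^2"
    unfolding power2_norm_eq_inner inner_blocks[of y] inner_blocks[of "Pi_blk g *v y"] blk_Pi
    by (rule sum_mono) (rule pperp_props(2)[OF assms])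
  then show "norm (Pi_blk g *v y) \<le> norm y" by (simp add: power_mono_iff)
qed

lemma inner_transpose: "(z::real^'n::finite) \<bullet> (transpose A *v y) = (A *v z) \<bullet> (y::real^'m::finite)"
  by (metis dot_lmul_matrix inner_commute transpose_matrix_vector)

lemma LB_mv: "bearing_Lap src dst g *v w = transpose (Hbar src dst) *v (Pi_blk g *v (Hbar src dst *v w))"
  by (simp add: bearing_Lap_def matrix_vector_mul_assoc matrix_mul_assoc del: transpose_matrix_vector)

lemma LB_quad: "z \<bullet> (bearing_Lap src dst g *v w) = (Hbar src dst *v z) \<bullet> (Pi_blk g *v (Hbar src dst *v w))"
  unfolding LB_mv by (rule inner_transpose)

lemma Lap_quad: "z \<bullet> (Lap src dst *v w) = (Hbar src dst *v z) \<bullet> (Hbar src dst *v w)"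
  unfolding Lap_def matrix_vector_mul_assoc[symmetric] by (rule inner_transpose)

lemma blk_H_edge: "blk (Hbar src dst *v p) k = edge_vec src dst p $ k"
  by (simp add: blk_def edge_vec_def)

lemma bearings_unit:
  assumes "edge_vec src dst p $ k \<noteq> 0"
  shows "norm (bearings src dst p $ k) = 1"
  using assms by (simp add: bearings_def)

lemma Pi_H_p:
  fixes p :: "real^('n::finite \<times> 'd::finite)" and src dst :: "'m::finite \<Rightarrow> 'n"
  assumes "\<And>k. edge_vec src dst p $ k \<noteq> 0"
  shows "Pi_blk (bearings src dst p) *v (Hbar src dst *v p) = 0"
proof -
  have "blk (Pi_blk (bearings src dst p) *v (Hbar src dst *v p)) k = 0" for k
  proof -
    let ?e = "edge_vec src dst p $ k"
    have ne: "norm ?e \<noteq> 0" using assms by simp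
    have "pperp (bearings src dst p $ k) ?e = ?e - ((1 / norm ?e) * (?e \<bullet> ?e)) *\<^sub>R ((1 / norm ?e) *\<^sub>R ?e)"
      by (simp add: pperp_def bearings_def)
    also have "(1 / norm ?e) * (?e \<bullet> ?e) = norm ?e" using ne by (simp add: power2_norm_eq_inner[symmetric] power2_eq_square)
    finally show ?thesis using ne by (simp add: blk_Pi blk_H_edge)
  qed
  then show ?thesis by (simp add: blk_def vec_eq_iff)
qed

lemma Hbar_ones:
  fixes src dst :: "'m::finite \<Rightarrow> 'n::finite"
  assumes "\<And>k. src k \<noteq> dst k"
  shows "Hbar src dst *v (ones_kron c :: real^('n \<times> 'd::finite)) = 0"
proof -
  have "(Hbar src dst *v (ones_kron c :: real^('n \<times> 'd))) $ ka = 0" for ka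
    by (cases ka) (simp add: Hbar_mv assms ones_kron_def)
  then show ?thesis by (simp add: vec_eq_iff)
qed

lemma LB_ones:
  fixes src dst :: "'m::finite \<Rightarrow> 'n::finite"
  assumes "\<And>k. src k \<noteq> dst k"
  shows "bearing_Lap src dst g *v (ones_kron c :: real^('n \<times> 'd::finite)) = 0"
  unfolding LB_mv Hbar_ones[OF assms] by simp

lemma LB_ones_inner:
  fixes src dst :: "'m::finite \<Rightarrow> 'n::finite"
  assumes "\<And>k. src k \<noteq> dst k"
  shows "(ones_kron c :: real^('n \<times> 'd::finite)) \<bullet> (bearing_Lap src dst g *v w) = 0"
  unfolding LB_quad Hbar_ones[OF assms] by simp

definition avg :: "real^('n::finite \<times> 'd::finite) \<Rightarrow> real^'d" where
  "avg e = (\<chi> a. (\<Sum>i\<in>UNIV. e$(i,a)) / real CARD('n))"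

definition perp :: "real^('n::finite \<times> 'd::finite) \<Rightarrow> real^('n \<times> 'd)" where
  "perp e = e - ones_kron (avg e)"

lemma sum_perp: "(\<Sum>i\<in>UNIV. perp e $ (i,a)) = 0"
  by (simp add: perp_def avg_def ones_kron_def sum_subtractf)

lemma inner_ones: "(z::real^('n::finite \<times> 'd::finite)) \<bullet> ones_kron c = (\<Sum>a\<in>UNIV. c$a * (\<Sum>i\<in>UNIV. z$(i,a)))"
  by (simp add: inner_vec_def sum_prod_UNIV ones_kron_def sum_distrib_left mult.commute sum.swap[of _ "UNIV::'n set"])

lemma ortho_ones: "(\<And>a. (\<Sum>i\<in>UNIV. z$(i,a)) = 0) \<Longrightarrow> (z::real^('n::finite \<times> 'd::finite)) \<bullet> ones_kron c = 0"
  by (simp add: inner_ones)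

lemma norm_perp_le: "norm (perp y) \<le> norm y"
proof -
  have y: "y = perp y + ones_kron (avg y)" by (simp add: perp_def)
  have o: "perp y \<bullet> ones_kron (avg y) = 0" by (rule ortho_ones, rule sum_perp)
  have "(norm y)^2 = (norm (perp y))^2 + (norm (ones_kron (avg y) :: real^('a \<times> 'b)))^2"
    by (subst y, simp only: power2_norm_eq_inner inner_add_left inner_add_right o inner_commute[of "ones_kron _" "perp y"])
  then have "(norm (perp y))^2 \<le> (norm y)^2" by simp
  then show ?thesis by (simp add: power_mono_iff)
qed

lemma avg_diff: fixes e :: "real^('n::finite \<times> 'd::finite)" shows "avg (e - ones_kron c) = avg e - c"
  unfolding avg_def ones_kron_def by (simp add: vec_eq_iff sum_subtractf diff_divide_distrib)

lemma perp_shift: fixes e :: "real^('n::finite \<times> 'd::finite)" shows "perp (e - ones_kron c) = perp e"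
  unfolding perp_def avg_diff by (simp add: ones_kron_def vec_eq_iff)

lemma infdist_ge: fixes e :: "real^('n::finite \<times> 'd::finite)" shows "norm (perp e) \<le> infdist e (range ones_kron)"
  unfolding infdist_def
proof (simp, rule cINF_greatest)
  show "range ones_kron \<noteq> {}" by simp
  fix a :: "real^('n \<times> 'd)" assume "a \<in> range ones_kron"
  then obtain c where a: "a = ones_kron c" by blast
  have "norm (perp e) = norm (perp (e - ones_kron c))" by (simp add: perp_shift)
  also have "\<dots> \<le> norm (e - ones_kron c)" by (rule norm_perp_le)
  finally show "norm (perp e) \<le> dist e a" by (simp add: a dist_norm)
qed

lemma conn_zero:
  fixes src dst :: "'m::finite \<Rightarrow> 'n::finite" and w :: "real^('n \<times> 'd::finite)"
  assumes graph: "simple_undirected_graph src dst" and st: "has_spanning_tree src dst"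
    and Hw: "Hbar src dst *v w = 0" and s: "\<And>a. (\<Sum>i\<in>UNIV. w$(i,a)) = 0"
  shows "w = 0"
proof -
  from st obtain S where conn: "connects src dst S" unfolding has_spanning_tree_def by blast
  have ne: "src k \<noteq> dst k" for k using graph by (simp add: simple_undirected_graph_def)
  have edge: "w$(dst k,a) = w$(src k,a)" for k a
    using Hbar_mv[of src k dst w a] ne[of k] Hw by simp
  define R where "R = {(src k, dst k) | k. k \<in> S} \<union> {(dst k, src k) | k. k \<in> S}"
  have path: "(i,j) \<in> R\<^sup>* \<Longrightarrow> w$(i,a) = w$(j,a)" for i j a
    by (induction rule: rtrancl_induct) (auto simp: R_def edge)
  have eq: "w$(i,a) = w$(j,a)" for i j a
    using conn path unfolding connects_def R_def by blast
  have "w$(j,a) = 0" for j a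
  proof -
    have "(\<Sum>i\<in>UNIV. w$(i,a)) = (\<Sum>i\<in>(UNIV::'n set). w$(j,a))" by (intro sum.cong refl eq)
    then have "real CARD('n) * w$(j,a) = 0" using s[of a] by simp
    then show ?thesis by simp
  qed
  then show ?thesis by (simp add: vec_eq_iff)
qed

lemma lambda2:
  fixes src dst :: "'m::finite \<Rightarrow> 'n::finite"
  assumes graph: "simple_undirected_graph src dst" and st: "has_spanning_tree src dst"
  shows "\<exists>l>0. \<forall>w::real^('n \<times> 'd::finite). (\<forall>a. (\<Sum>i\<in>UNIV. w$(i,a)) = 0) \<longrightarrow> l * (norm w)^2 \<le> (norm (Hbar src dst *v w))^2"
proof -
  define C where "C = {w::real^('n \<times> 'd). \<forall>a. (\<Sum>i\<in>UNIV. w$(i,a)) = 0}"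
  have clC: "closed C" unfolding C_def
    by (intro closed_Collect_all closed_Collect_eq) (intro continuous_intros)+
  have scC: "r *\<^sub>R w \<in> C" if "w \<in> C" for r w using that by (simp add: C_def sum_distrib_left[symmetric])
  define K0 where "K0 = sphere 0 1 \<inter> C"
  have cK: "compact K0" unfolding K0_def using clC by (intro compact_Int_closed compact_sphere)
  show ?thesis
  proof (cases "K0 = {}")
    case True
    have z: "w = 0" if "w \<in> C" for w
    proof (rule ccontr)
      assume "w \<noteq> 0"
      then have "(1 / norm w) *\<^sub>R w \<in> K0" using scC[OF that] by (simp add: K0_def)
      then show False using True by simp
    qed
    show ?thesis
    proof (intro exI[of _ "1::real"] conjI allI impI)
      show "(0::real) < 1" by simp
      fix w :: "real^('n \<times> 'd)" assume "\<forall>a. (\<Sum>i\<in>UNIV. w$(i,a)) = 0"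
      then have "w = 0" using z[of w] by (simp add: C_def)
      then show "1 * (norm w)^2 \<le> (norm (Hbar src dst *v w))^2" by simp
    qed
  next
    case False
    have "continuous_on K0 (\<lambda>w. (norm (Hbar src dst *v w))^2)"
      by (intro continuous_intros)
    then obtain w0 where w0: "w0 \<in> K0" and min: "\<And>w. w \<in> K0 \<Longrightarrow> (norm (Hbar src dst *v w0))^2 \<le> (norm (Hbar src dst *v w))^2"
      using continuous_attains_inf[OF cK False] by blast
    define l where "l = (norm (Hbar src dst *v w0))^2"
    have "Hbar src dst *v w0 \<noteq> 0"
    proof
      assume "Hbar src dst *v w0 = 0"
      then have "w0 = 0" using conn_zero[OF graph st] w0 by (auto simp: K0_def C_def)
      then show False using w0 by (simp add: K0_def)
    qed
    then have lpos: "l > 0" by (simp add: l_def)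
    have "l * (norm w)^2 \<le> (norm (Hbar src dst *v w))^2" if "w \<in> C" for w
    proof (cases "w = 0")
      case True then show ?thesis by simp
    next
      case False
      then have u: "(1 / norm w) *\<^sub>R w \<in> K0" using scC[OF that] by (simp add: K0_def)
      have "l \<le> (norm (Hbar src dst *v ((1 / norm w) *\<^sub>R w)))^2" unfolding l_def by (rule min[OF u])
      also have "\<dots> = (norm (Hbar src dst *v w))^2 / (norm w)^2"
        by (simp add: matrix_vector_mult_scaleR power_divide)
      finally show ?thesis using False by (simp add: field_simps)
    qed
    then show ?thesis using lpos by (auto simp: C_def)
  qed
qed

lemma hvd_inner:
  assumes "(f has_vector_derivative f') (at x within S)" "(g has_vector_derivative g') (at x within S)"
  shows "((\<lambda>t. f t \<bullet> g t) has_vector_derivative (f x \<bullet> g' + f' \<bullet> g x)) (at x within S)"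
  unfolding has_vector_derivative_def
  by (rule has_derivative_eq_rhs[OF has_derivative_inner[OF assms[unfolded has_vector_derivative_def]]])
     (simp add: fun_eq_iff algebra_simps)

lemma cont_mm: "continuous_on S B \<Longrightarrow> continuous_on S (\<lambda>x. (A::real^'b::finite^'a::finite) ** B x ** (C::real^'d::finite^'c::finite))"
  by (auto simp: matrix_matrix_mult_def intro!: continuous_intros)

lemma cont_Pi: "continuous_on S G \<Longrightarrow> continuous_on S (\<lambda>x. Pi_blk (G x :: real^'d::finite^'m::finite))"
proof -
  assume cG: "continuous_on S G"
  have "continuous_on S (\<lambda>x. Pi_blk (G x) $ k $ l)" for k l
    by (cases "fst k = fst l") (auto simp: Pi_blk_def proj_perp_def mat_def intro!: continuous_intros cG)
  then show ?thesis by (subst vec_lambda_eta[symmetric], intro continuous_on_vec_lambda, subst vec_lambda_eta[symmetric], intro continuous_on_vec_lambda) simp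
qed

lemma cont_bearings:
  fixes p :: "real \<Rightarrow> real^('n::finite \<times> 'd::finite)" and src dst :: "'m::finite \<Rightarrow> 'n"
  assumes cp: "continuous_on S p" and ne: "\<And>t k. t \<in> S \<Longrightarrow> edge_vec src dst (p t) $ k \<noteq> 0"
  shows "continuous_on S (\<lambda>t. bearing_Lap src dst (bearings src dst (p t)))"
proof -
  have ce: "continuous_on S (\<lambda>t. edge_vec src dst (p t) $ k)" for k
    unfolding edge_vec_def by (auto intro!: continuous_intros cont_mv[of S "\<lambda>_. (Hbar src dst :: real^('n \<times> 'd)^('m \<times> 'd))" p] cp)
  have "continuous_on S (\<lambda>t. bearings src dst (p t))"
    unfolding bearings_def
    by (intro continuous_intros ce) (use ne in auto)
  then show ?thesis unfolding bearing_Lap_def by (intro cont_mm cont_Pi)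
qed

declare transpose_matrix_vector[simp del]

lemma amgm: fixes q a :: real assumes "0 \<le> q" "0 < a" shows "sqrt q \<le> (q / a + a) / 2"
proof -
  have "0 \<le> (sqrt q - a)^2" by simp
  then have "2 * a * sqrt q \<le> q + a^2" using assms by (simp add: power2_eq_square algebra_simps)
  then show ?thesis using assms by (simp add: field_simps power2_eq_square)
qed

lemma sq_sum_le: fixes a b :: real shows "(a + b)^2 \<le> 2 * a^2 + 2 * b^2"
proof -
  have "0 \<le> (a - b)^2" by simp
  then show ?thesis by (simp add: power2_eq_square algebra_simps)
qed

lemma FTC_from:
  fixes f :: "real \<Rightarrow> 'a::banach"
  assumes "\<And>\<tau>. \<tau> \<ge> t0 \<Longrightarrow> (f has_vector_derivative f' \<tau>) (at \<tau> within {t0..})"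
    and "t0 \<le> a" "a \<le> b"
  shows "(f' has_integral f b - f a) {a..b}"
  by (rule fundamental_theorem_of_calculus[OF assms(3)])
     (rule has_vector_derivative_within_subset[OF assms(1)], use assms in auto)

lemma core:
  fixes LB :: "real \<Rightarrow> real^'k::finite^'k" and H :: "real^'k^'e::finite" and Pt :: "real \<Rightarrow> real^'e^'e"
  assumes LBd: "\<And>\<tau> z. \<tau> \<ge> 0 \<Longrightarrow> LB \<tau> *v z = transpose H *v (Pt \<tau> *v (H *v z))"
    and Pq: "\<And>\<tau> y. \<tau> \<ge> 0 \<Longrightarrow> y \<bullet> (Pt \<tau> *v y) = (norm (Pt \<tau> *v y))^2"
    and Pn: "\<And>\<tau> y. \<tau> \<ge> 0 \<Longrightarrow> norm (Pt \<tau> *v y) \<le> norm y"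
    and cLB: "continuous_on {0..} LB"
    and T: "T > 0" and mu: "\<mu> > 0"
    and PE: "\<And>t. t \<ge> 0 \<Longrightarrow> loewner_le (\<mu> *\<^sub>R (transpose H ** H)) (integral {t..t+T} LB)"
    and l2: "l2 > 0"
  shows "\<exists>\<kappa>>0. \<exists>lam>0. \<forall>t0\<ge>0. \<forall>w. (\<forall>t\<ge>t0. (w has_vector_derivative -(LB t *v w t)) (at t within {t0..})) \<longrightarrow>
           (\<forall>t\<ge>t0. l2 * (norm (w t))^2 \<le> (norm (H *v w t))^2) \<longrightarrow>
           (\<forall>t\<ge>t0. norm (w t) \<le> \<kappa> * exp (- lam * (t - t0)) * norm (w t0))"
proof -
  define KT where "KT = real CARD('k) * real CARD('e) * norm (transpose H) + 1"
  have KTp: "KT > 0" unfolding KT_def by (simp add: add_nonneg_pos)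
  have KTb: "norm (transpose H *v y) \<le> KT * norm y" for y
  proof -
    have "norm (transpose H *v y) \<le> real CARD('k) * real CARD('e) * norm (transpose H) * norm y" by (rule mat_bound)
    also have "\<dots> \<le> KT * norm y" unfolding KT_def by (intro mult_right_mono) auto
    finally show ?thesis .
  qed
  define KH where "KH = real CARD('e) * real CARD('k) * norm H + 1"
  have KHp: "KH > 0" unfolding KH_def by (simp add: add_nonneg_pos)
  have KHb: "norm (H *v y) \<le> KH * norm y" for y
  proof -
    have "norm (H *v y) \<le> real CARD('e) * real CARD('k) * norm H * norm y" by (rule mat_bound)
    also have "\<dots> \<le> KH * norm y" unfolding KH_def by (intro mult_right_mono) auto
    finally show ?thesis .
  qed
  define c where "c = 2 * KH^2 * KT^2 * T^2"
  have c0: "c \<ge> 0" unfolding c_def by simp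
  define \<gamma> where "\<gamma> = \<mu> * l2 / (2 + c)"
  have \<gamma>p: "\<gamma> > 0" unfolding \<gamma>_def using mu l2 c0 by simp
  define \<rho> where "\<rho> = max (1 - 2 * \<gamma>) (1/2)"
  have \<rho>p: "\<rho> > 0" "\<rho> < 1" "1 - 2 * \<gamma> \<le> \<rho>" using \<gamma>p by (auto simp: \<rho>_def)
  define lam where "lam = - ln \<rho> / (2 * T)"
  have lnr: "ln \<rho> < 0" using \<rho>p by simp
  have lamp: "lam > 0" unfolding lam_def using lnr T by (intro divide_pos_pos) auto
  define \<kappa> where "\<kappa> = sqrt (1 / \<rho>)"
  have \<kappa>p: "\<kappa> > 0" unfolding \<kappa>_def using \<rho>p by simp
  have LBquad: "z \<bullet> (LB \<tau> *v z) = (norm (Pt \<tau> *v (H *v z)))^2" if "\<tau> \<ge> 0" for \<tau> z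
    using that by (simp add: LBd inner_transpose Pq)
  show ?thesis
  proof (rule exI[of _ \<kappa>], rule conjI[OF \<kappa>p], rule exI[of _ lam], rule conjI[OF lamp], intro allI impI)
    fix t0 :: real and w :: "real \<Rightarrow> real^'k" and t :: real
    assume t0: "t0 \<ge> 0"
      and wd: "\<forall>t\<ge>t0. (w has_vector_derivative -(LB t *v w t)) (at t within {t0..})"
      and wl: "\<forall>t\<ge>t0. l2 * (norm (w t))^2 \<le> (norm (H *v w t))^2"
      and t: "t \<ge> t0"
    define V where "V \<tau> = w \<tau> \<bullet> w \<tau>" for \<tau>
    define q where "q \<tau> = (norm (Pt \<tau> *v (H *v w \<tau>)))^2" for \<tau>
    have qnn: "0 \<le> q \<tau>" for \<tau> by (simp add: q_def)
    have Vnn: "0 \<le> V \<tau>" for \<tau> by (simp add: V_def)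
    have dV: "(V has_vector_derivative (-2 * q \<tau>)) (at \<tau> within {t0..})" if "\<tau> \<ge> t0" for \<tau>
    proof -
      have "(V has_vector_derivative (w \<tau> \<bullet> -(LB \<tau> *v w \<tau>) + -(LB \<tau> *v w \<tau>) \<bullet> w \<tau>)) (at \<tau> within {t0..})"
        unfolding V_def by (rule hvd_inner) (use wd that in auto)
      moreover have "w \<tau> \<bullet> -(LB \<tau> *v w \<tau>) + -(LB \<tau> *v w \<tau>) \<bullet> w \<tau> = -2 * q \<tau>"
        using LBquad[of \<tau> "w \<tau>"] that t0 by (simp add: q_def inner_commute)
      ultimately show ?thesis by simp
    qed
    have Qint: "(q has_integral (V a - V b) / 2) {a..b}" if "t0 \<le> a" "a \<le> b" for a b
    proof -
      have "((\<lambda>\<tau>. -2 * q \<tau>) has_integral V b - V a) {a..b}" by (rule FTC_from[OF dV that])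
      from has_integral_mult_right[OF this, of "-1/2"] have "(q has_integral - ((V b - V a) / 2)) {a..b}" by simp
      moreover have "- ((V b - V a) / 2) = (V a - V b) / 2" by (simp only: minus_divide_left minus_diff_eq)
      ultimately show ?thesis by simp
    qed
    have mono: "V b \<le> V a" if "t0 \<le> a" "a \<le> b" for a b
      using has_integral_nonneg[OF Qint[OF that] qnn] by simp
    have wdb: "norm (LB \<tau> *v w \<tau>) \<le> KT * sqrt (q \<tau>)" if "\<tau> \<ge> t0" for \<tau>
      using that t0 KTb[of "Pt \<tau> *v (H *v w \<tau>)"] by (simp add: LBd q_def)
    have window: "V (t + T) \<le> \<rho> * V t" if t: "t \<ge> t0" for t
    proof -
      define t1 where "t1 = t + T"
      define D where "D = (V t - V t1) / 2"
      have tt1: "t \<le> t1" using T by (simp add: t1_def)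
      have D0: "0 \<le> D" using mono[OF t tt1] by (simp add: D_def)
      have Dint: "(q has_integral D) {t..t1}" unfolding D_def by (rule Qint[OF t tt1])
      have dw: "(norm (w \<tau> - w t))^2 \<le> KT^2 * T * D" if \<tau>: "\<tau> \<in> {t..t1}" for \<tau>
      proof -
        have t\<tau>: "t0 \<le> t" "t \<le> \<tau>" using t \<tau> by auto
        have W: "((\<lambda>s. -(LB s *v w s)) has_integral w \<tau> - w t) {t..\<tau>}"
          by (rule FTC_from[OF _ t\<tau>]) (use wd in auto)
        have Qt: "(q has_integral (V t - V \<tau>) / 2) {t..\<tau>}" by (rule Qint[OF t\<tau>])
        have bnd: "norm (w \<tau> - w t) \<le> KT / 2 * (D / \<alpha> + \<alpha> * T)" if \<alpha>: "\<alpha> > 0" for \<alpha>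
        proof -
          have G: "((\<lambda>s. KT / 2 * (q s / \<alpha> + \<alpha>)) has_integral KT / 2 * ((V t - V \<tau>) / 2 / \<alpha> + (\<tau> - t) * \<alpha>)) {t..\<tau>}"
            using has_integral_mult_right[OF has_integral_add[OF has_integral_divide[OF Qt, of \<alpha>] has_integral_const_real[of \<alpha> t \<tau>]], of "KT/2"]
            using t\<tau> by simp
          have "norm (w \<tau> - w t) = norm (integral {t..\<tau>} (\<lambda>s. -(LB s *v w s)))" by (simp only: integral_unique[OF W])
          also have "\<dots> \<le> integral {t..\<tau>} (\<lambda>s. KT / 2 * (q s / \<alpha> + \<alpha>))"
          proof (rule integral_norm_bound_integral)
            show "(\<lambda>s. -(LB s *v w s)) integrable_on {t..\<tau>}" using W by blast
            show "(\<lambda>s. KT / 2 * (q s / \<alpha> + \<alpha>)) integrable_on {t..\<tau>}" using G by blast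
            fix s assume s: "s \<in> {t..\<tau>}"
            have "norm (-(LB s *v w s)) \<le> KT * sqrt (q s)" using wdb[of s] s t\<tau> by simp
            also have "\<dots> \<le> KT * ((q s / \<alpha> + \<alpha>) / 2)" using amgm[OF qnn \<alpha>] KTp by (intro mult_left_mono) auto
            finally show "norm (-(LB s *v w s)) \<le> KT / 2 * (q s / \<alpha> + \<alpha>)" by simp
          qed
          also have "\<dots> = KT / 2 * ((V t - V \<tau>) / 2 / \<alpha> + (\<tau> - t) * \<alpha>)" by (rule integral_unique[OF G])
          also have "\<dots> \<le> KT / 2 * (D / \<alpha> + \<alpha> * T)"
          proof -
            have "V t1 \<le> V \<tau>" using mono[of \<tau> t1] \<tau> t\<tau> by auto
            then have "(V t - V \<tau>) / 2 / \<alpha> \<le> D / \<alpha>" using \<alpha> by (simp add: D_def divide_right_mono)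
            moreover have "(\<tau> - t) * \<alpha> \<le> \<alpha> * T" using \<tau> \<alpha> by (simp add: t1_def mult.commute)
            ultimately show ?thesis using KTp by (intro mult_left_mono) auto
          qed
          finally show ?thesis .
        qed
        show ?thesis
        proof (cases "D = 0")
          case True
          have "norm (w \<tau> - w t) = 0"
          proof (rule ccontr)
            assume ne: "norm (w \<tau> - w t) \<noteq> 0"
            then have np: "norm (w \<tau> - w t) > 0" by simp
            define \<alpha> where "\<alpha> = norm (w \<tau> - w t) / (KT * T)"
            have \<alpha>p: "\<alpha> > 0" unfolding \<alpha>_def using np KTp T by simp
            have "norm (w \<tau> - w t) \<le> KT / 2 * (\<alpha> * T)" using bnd[OF \<alpha>p] True by simp
            also have "\<dots> = norm (w \<tau> - w t) / 2" unfolding \<alpha>_def using KTp T by (simp add: field_simps)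
            finally show False using np by simp
          qed
          then show ?thesis using True by simp
        next
          case False
          then have Dp: "D > 0" using D0 by simp
          define \<alpha> where "\<alpha> = sqrt (D / T)"
          have \<alpha>p: "\<alpha> > 0" unfolding \<alpha>_def using Dp T by simp
          have a2: "\<alpha>^2 = D / T" unfolding \<alpha>_def using Dp T by simp
          have "D / \<alpha> = \<alpha> * T" using a2 \<alpha>p T by (simp add: field_simps power2_eq_square)
          then have "norm (w \<tau> - w t) \<le> KT * (\<alpha> * T)" using bnd[OF \<alpha>p] by (simp add: mult.commute)
          then have "(norm (w \<tau> - w t))^2 \<le> (KT * (\<alpha> * T))^2" by (simp add: power_mono)
          also have "\<dots> = KT^2 * T * D" using a2 T by (simp add: power_mult_distrib power2_eq_square field_simps)
          finally show ?thesis .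
        qed
      qed
      have sub: "{t..t1} \<subseteq> {0..}" using t t0 by auto
      have intLB: "LB integrable_on {t..t1}"
        by (rule integrable_continuous_real, rule continuous_on_subset[OF cLB sub])
      define x where "x = w t"
      have blh: "bounded_linear (\<lambda>M. x \<bullet> (M *v x))"
        using bounded_linear_compose[OF bounded_linear_inner_right[of x] bounded_bilinear.bounded_linear_left[OF bb_mv, of x]]
        by (simp add: o_def)
      have int2: "(\<lambda>\<tau>. x \<bullet> (LB \<tau> *v x)) integrable_on {t..t1}"
        using integrable_linear[OF intLB blh] by (simp add: o_def)
      have intlin: "integral {t..t1} (\<lambda>\<tau>. x \<bullet> (LB \<tau> *v x)) = x \<bullet> (integral {t..t1} LB *v x)"
        using integral_linear[OF intLB blh] by (simp add: o_def)
      have PEi: "\<mu> * (norm (H *v x))^2 \<le> integral {t..t1} (\<lambda>\<tau>. x \<bullet> (LB \<tau> *v x))"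
      proof -
        have "0 \<le> x \<bullet> ((integral {t..t1} LB - \<mu> *\<^sub>R (transpose H ** H)) *v x)"
          using PE[of t] t t0 by (simp add: loewner_le_def t1_def)
        also have "\<dots> = x \<bullet> (integral {t..t1} LB *v x) - \<mu> * (x \<bullet> (transpose H *v (H *v x)))"
          by (simp add: matrix_vector_mult_diff_rdistrib scaleR_matrix_vector_assoc[symmetric] matrix_vector_mul_assoc[symmetric] inner_diff_right
                   del: transpose_matrix_vector)
        also have "x \<bullet> (transpose H *v (H *v x)) = (norm (H *v x))^2"
          by (simp only: inner_transpose power2_norm_eq_inner)
        finally show ?thesis using intlin by simp
      qed
      have ptw: "x \<bullet> (LB \<tau> *v x) \<le> 2 * q \<tau> + 2 * KH^2 * (KT^2 * T * D)" if \<tau>: "\<tau> \<in> {t..t1}" for \<tau>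
      proof -
        have \<tau>0: "\<tau> \<ge> 0" using \<tau> t t0 by auto
        have split: "Pt \<tau> *v (H *v x) = Pt \<tau> *v (H *v w \<tau>) + Pt \<tau> *v (H *v (x - w \<tau>))"
          by (simp add: matrix_vector_right_distrib[symmetric] matrix_vector_mult_diff_distrib)
        have n2: "norm (Pt \<tau> *v (H *v (x - w \<tau>))) \<le> KH * norm (w \<tau> - w t)"
          using Pn[OF \<tau>0, of "H *v (x - w \<tau>)"] KHb[of "x - w \<tau>"] by (simp add: x_def norm_minus_commute)
        have "x \<bullet> (LB \<tau> *v x) = (norm (Pt \<tau> *v (H *v x)))^2" by (rule LBquad[OF \<tau>0])
        also have "\<dots> \<le> (norm (Pt \<tau> *v (H *v w \<tau>)) + KH * norm (w \<tau> - w t))^2"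
          unfolding split by (rule power_mono, rule order_trans[OF norm_triangle_ineq], use n2 in simp) simp
        also have "\<dots> \<le> 2 * q \<tau> + 2 * (KH * norm (w \<tau> - w t))^2"
          using sq_sum_le by (simp add: q_def)
        also have "(KH * norm (w \<tau> - w t))^2 \<le> KH^2 * (KT^2 * T * D)"
          using dw[OF \<tau>] by (simp add: power_mult_distrib mult_left_mono)
        finally show ?thesis by simp
      qed
      have RH: "((\<lambda>\<tau>. 2 * q \<tau> + 2 * KH^2 * (KT^2 * T * D)) has_integral (2 * D + T * (2 * KH^2 * (KT^2 * T * D)))) {t..t1}"
        using has_integral_add[OF has_integral_mult_right[OF Dint, of 2] has_integral_const_real[of "2 * KH^2 * (KT^2 * T * D)" t t1]]
        using tt1 by (simp add: t1_def)
      have "integral {t..t1} (\<lambda>\<tau>. x \<bullet> (LB \<tau> *v x)) \<le> 2 * D + T * (2 * KH^2 * (KT^2 * T * D))"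
        using has_integral_le[OF int2[unfolded has_integral_integral] RH ptw] by simp
      also have "\<dots> = (2 + c) * D" by (simp add: c_def algebra_simps power2_eq_square)
      finally have "\<mu> * (norm (H *v x))^2 \<le> (2 + c) * D" using PEi by simp
      moreover have "l2 * V t \<le> (norm (H *v x))^2" using wl t by (simp add: V_def x_def power2_norm_eq_inner)
      ultimately have "\<mu> * (l2 * V t) \<le> (2 + c) * D" using mu by (meson mult_left_mono less_imp_le order_trans)
      then have "\<gamma> * V t \<le> D" unfolding \<gamma>_def using c0 by (simp add: field_simps)
      then have "V t1 \<le> (1 - 2 * \<gamma>) * V t" by (simp add: D_def algebra_simps)
      also have "\<dots> \<le> \<rho> * V t" using \<rho>p(3) Vnn by (intro mult_right_mono) auto
      finally show ?thesis by (simp add: t1_def)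
    qed
    have iter: "V (t0 + real j * T + s) \<le> \<rho>^j * V t0" if "s \<ge> 0" for j s
    proof (induction j)
      case 0 then show ?case using mono[of t0 "t0 + s"] that by simp
    next
      case (Suc j)
      have "V (t0 + real (Suc j) * T + s) = V ((t0 + real j * T + s) + T)" by (simp add: algebra_simps)
      also have "\<dots> \<le> \<rho> * V (t0 + real j * T + s)" by (rule window) (use that T in simp)
      also have "\<dots> \<le> \<rho> * (\<rho>^j * V t0)" using Suc \<rho>p by (intro mult_left_mono) auto
      finally show ?case by simp
    qed
    define j where "j = nat \<lfloor>(t - t0) / T\<rfloor>"
    have fl0: "0 \<le> \<lfloor>(t - t0) / T\<rfloor>" using t T by simp
    have jle: "real j \<le> (t - t0) / T" unfolding j_def using fl0 by simp
    have jge: "(t - t0) / T - 1 \<le> real j" unfolding j_def using fl0 by linarith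
    define s where "s = t - t0 - real j * T"
    have s0: "s \<ge> 0" using jle T by (simp add: s_def field_simps)
    have Vt: "V t \<le> \<rho>^j * V t0" using iter[OF s0, of j] by (simp add: s_def)
    have "\<rho>^j = exp (real j * ln \<rho>)" using \<rho>p by (simp add: exp_of_nat_mult)
    also have "\<dots> \<le> exp (((t - t0) / T - 1) * ln \<rho>)"
      using jge \<rho>p by (simp add: mult_right_mono_neg)
    also have "((t - t0) / T - 1) * ln \<rho> = - ln \<rho> + (- 2 * lam * (t - t0))"
      unfolding lam_def using T by (simp add: field_simps)
    also have "exp (- ln \<rho> + (- 2 * lam * (t - t0))) = (1 / \<rho>) * (exp (- lam * (t - t0)))^2"
    proof -
      have e1: "exp (- ln \<rho>) = 1 / \<rho>" using \<rho>p by (simp add: exp_minus inverse_eq_divide)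
      have h: "- 2 * lam * (t - t0) = - lam * (t - t0) + - lam * (t - t0)" by simp
      have e2: "exp (- 2 * lam * (t - t0)) = (exp (- lam * (t - t0)))^2"
        by (simp only: h power2_eq_square exp_add)
      show ?thesis by (simp only: exp_add e1 e2)
    qed
    finally have "\<rho>^j \<le> (1 / \<rho>) * (exp (- lam * (t - t0)))^2" .
    then have "V t \<le> (1 / \<rho>) * (exp (- lam * (t - t0)))^2 * V t0"
      using Vt Vnn by (meson mult_right_mono order_trans)
    also have "\<dots> = (\<kappa> * exp (- lam * (t - t0)) * norm (w t0))^2"
      unfolding \<kappa>_def using \<rho>p by (simp add: power_mult_distrib V_def power2_norm_eq_inner)
    finally have "(norm (w t))^2 \<le> (\<kappa> * exp (- lam * (t - t0)) * norm (w t0))^2"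
      by (simp add: V_def power2_norm_eq_inner)
    then show "norm (w t) \<le> \<kappa> * exp (- lam * (t - t0)) * norm (w t0)"
      by (rule power2_le_imp_le) (use \<kappa>p in simp)
  qed
qed

declare transpose_matrix_vector[simp del]

lemma neg_mv: "(- (A::real^'n::finite^'m::finite)) *v x = - (A *v x)"
  by (simp add: matrix_vector_mult_def vec_eq_iff sum_negf)

lemma inner_ones_axis: "(z::real^('n::finite \<times> 'd::finite)) \<bullet> ones_kron (axis a 1) = (\<Sum>i\<in>UNIV. z$(i,a))"
proof -
  have "z \<bullet> ones_kron (axis a 1) = (\<Sum>aa\<in>UNIV. if aa = a then (\<Sum>i\<in>UNIV. z $ (i, aa)) else 0)"
    unfolding inner_ones by (rule sum.cong) (auto simp: axis_def)
  then show ?thesis by simp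
qed

theorem corollary1:
  fixes src dst :: "'m::finite \<Rightarrow> 'n::finite"
  assumes d2: "CARD('d::finite) \<ge> 2"
    and n2: "CARD('n) \<ge> 2"
    and graph: "simple_undirected_graph src dst"
  shows "\<exists>F :: real^('n \<times> 'd) \<Rightarrow> real^'d^'m \<Rightarrow> real^('n \<times> 'd) \<Rightarrow> real^('n \<times> 'd).
    \<forall>(p :: real \<Rightarrow> real^('n \<times> 'd)) v.
      (\<forall>t\<ge>0. (p has_vector_derivative v t) (at t within {0..})) \<longrightarrow>
      (\<exists>B. \<forall>t\<ge>0. norm (v t) \<le> B) \<longrightarrow>
      (\<forall>t\<ge>0. \<forall>k. edge_vec src dst (p t) $ k \<noteq> 0) \<longrightarrow>
      relaxed_bearing_rigid src dst p \<longrightarrow>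
      (\<exists>\<kappa> lam. \<kappa> > 0 \<and> lam > 0 \<and>
        (\<forall>t0\<ge>0. \<forall>x0.
          (\<exists>x. x t0 = x0 \<and> (\<forall>t\<ge>t0. (x has_vector_derivative
                 F (x t) (bearings src dst (p t)) (v t)) (at t within {t0..}))) \<and>
          (\<forall>x. x t0 = x0 \<longrightarrow>
             (\<forall>t\<ge>t0. (x has_vector_derivative
                 F (x t) (bearings src dst (p t)) (v t)) (at t within {t0..})) \<longrightarrow>
             (\<exists>c. \<forall>t\<ge>t0. norm (x t - (p t + ones_kron c))
                  \<le> \<kappa> * exp (- lam * (t - t0)) * infdist (x0 - p t0) (range ones_kron)))))"
proof -
  have ne: "\<And>k. src k \<noteq> dst k" using graph by (simp add: simple_undirected_graph_def)
  define F where "F = (\<lambda>(x::real^('n \<times> 'd)) (g::real^'d^'m) (v::real^('n \<times> 'd)). v - bearing_Lap src dst g *v x)"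
  show ?thesis
  proof (rule exI[of _ F], intro allI impI)
    fix p :: "real \<Rightarrow> real^('n \<times> 'd)" and v :: "real \<Rightarrow> real^('n \<times> 'd)"
    assume pd: "\<forall>t\<ge>0. (p has_vector_derivative v t) (at t within {0..})"
      and vb: "\<exists>B. \<forall>t\<ge>0. norm (v t) \<le> B"
      and enz: "\<forall>t\<ge>0. \<forall>k. edge_vec src dst (p t) $ k \<noteq> 0"
      and rbr: "relaxed_bearing_rigid src dst p"
    from rbr have st: "has_spanning_tree src dst" and pe: "bearing_PE src dst p"
      by (auto simp: relaxed_bearing_rigid_def BPE_def)
    from pe obtain T \<mu> where T: "T > 0" and mu: "\<mu> > 0"
      and PE: "\<forall>t\<ge>0. loewner_le (\<mu> *\<^sub>R Lap src dst) (integral {t..t+T} (\<lambda>\<tau>. bearing_Lap src dst (bearings src dst (p \<tau>))))"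
      unfolding bearing_PE_def by blast
    define LB where "LB \<tau> = bearing_Lap src dst (bearings src dst (p \<tau>))" for \<tau>
    define Pt where "Pt \<tau> = Pi_blk (bearings src dst (p \<tau>))" for \<tau>
    define H where "H = (Hbar src dst :: real^('n \<times> 'd)^('m \<times> 'd))"
    have cp: "continuous_on {0..} p"
      unfolding continuous_on_eq_continuous_within
      using pd by (auto intro: has_vector_derivative_continuous)
    have cLB: "continuous_on {0..} LB" unfolding LB_def
      by (rule cont_bearings[OF cp]) (use enz in auto)
    have unit: "norm (bearings src dst (p \<tau>) $ k) = 1" if "\<tau> \<ge> 0" for \<tau> k
      by (rule bearings_unit) (use enz that in auto)
    obtain l2 where l2: "l2 > 0" and L2: "\<forall>w::real^('n \<times> 'd). (\<forall>a. (\<Sum>i\<in>UNIV. w$(i,a)) = 0) \<longrightarrow> l2 * (norm w)^2 \<le> (norm (Hbar src dst *v w))^2"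
      using lambda2[OF graph st] by blast
    have LBp: "LB t *v p t = 0" if "t \<ge> 0" for t
      unfolding LB_def LB_mv using Pi_H_p[of src dst "p t"] enz that by simp
    have LBo: "LB t *v ones_kron c = 0" for t c unfolding LB_def by (rule LB_ones[OF ne])
    have core_ex: "\<exists>\<kappa>>0. \<exists>lam>0. \<forall>t0\<ge>0. \<forall>w. (\<forall>t\<ge>t0. (w has_vector_derivative -(LB t *v w t)) (at t within {t0..})) \<longrightarrow>
           (\<forall>t\<ge>t0. l2 * (norm (w t))^2 \<le> (norm (H *v w t))^2) \<longrightarrow>
           (\<forall>t\<ge>t0. norm (w t) \<le> \<kappa> * exp (- lam * (t - t0)) * norm (w t0))"
    proof (rule core[of LB H Pt, OF _ _ _ cLB T mu _ l2])
      show "LB \<tau> *v z = transpose H *v (Pt \<tau> *v (H *v z))" for \<tau> z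
        by (simp add: LB_def Pt_def H_def LB_mv)
      show "y \<bullet> (Pt \<tau> *v y) = (norm (Pt \<tau> *v y))^2" if "\<tau> \<ge> 0" for \<tau> y
        unfolding Pt_def by (rule Pi_props(1)) (rule unit[OF that])
      show "norm (Pt \<tau> *v y) \<le> norm y" if "\<tau> \<ge> 0" for \<tau> y
        unfolding Pt_def by (rule Pi_props(2)) (rule unit[OF that])
      show "loewner_le (\<mu> *\<^sub>R (transpose H ** H)) (integral {t..t+T} LB)" if "t \<ge> 0" for t
        using PE that unfolding LB_def[abs_def] H_def Lap_def by blast
    qed
    then obtain \<kappa> lam where \<kappa>p: "\<kappa> > 0" and lamp: "lam > 0"
      and K: "\<forall>t0\<ge>0. \<forall>w. (\<forall>t\<ge>t0. (w has_vector_derivative -(LB t *v w t)) (at t within {t0..})) \<longrightarrow>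
           (\<forall>t\<ge>t0. l2 * (norm (w t))^2 \<le> (norm (H *v w t))^2) \<longrightarrow>
           (\<forall>t\<ge>t0. norm (w t) \<le> \<kappa> * exp (- lam * (t - t0)) * norm (w t0))"
      by blast
    have pd0: "(p has_vector_derivative v t) (at t within {t0..})" if "0 \<le> t0" "t0 \<le> t" for t0 t
      by (rule has_vector_derivative_within_subset[of _ _ _ "{0..}"]) (use pd that in auto)
    show "\<exists>\<kappa> lam. \<kappa> > 0 \<and> lam > 0 \<and>
        (\<forall>t0\<ge>0. \<forall>x0.
          (\<exists>x. x t0 = x0 \<and> (\<forall>t\<ge>t0. (x has_vector_derivative
                 F (x t) (bearings src dst (p t)) (v t)) (at t within {t0..}))) \<and>
          (\<forall>x. x t0 = x0 \<longrightarrow>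
             (\<forall>t\<ge>t0. (x has_vector_derivative
                 F (x t) (bearings src dst (p t)) (v t)) (at t within {t0..})) \<longrightarrow>
             (\<exists>c. \<forall>t\<ge>t0. norm (x t - (p t + ones_kron c))
                  \<le> \<kappa> * exp (- lam * (t - t0)) * infdist (x0 - p t0) (range ones_kron))))"
    proof (rule exI[of _ \<kappa>], rule exI[of _ lam], intro conjI allI impI)
      show "\<kappa> > 0" by (rule \<kappa>p)
      show "lam > 0" by (rule lamp)
    next
      fix t0 :: real and x0 :: "real^('n \<times> 'd)"
      assume t0: "0 \<le> t0"
      have cA: "continuous_on {t0..} (\<lambda>t. - LB t)"
        by (intro continuous_on_minus continuous_on_subset[OF cLB]) (use t0 in auto)
      obtain e where e0: "e t0 = x0 - p t0"
        and ed: "\<forall>t\<ge>t0. (e has_vector_derivative (- LB t) *v e t) (at t within {t0..})"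
        using linear_ode_exists[OF cA, of "x0 - p t0"] by blast
      show "\<exists>x. x t0 = x0 \<and> (\<forall>t\<ge>t0. (x has_vector_derivative
                 F (x t) (bearings src dst (p t)) (v t)) (at t within {t0..}))"
      proof (rule exI[of _ "\<lambda>t. p t + e t"], intro conjI allI impI)
        show "p t0 + e t0 = x0" using e0 by simp
        fix t assume t: "t0 \<le> t"
        have "((\<lambda>t. p t + e t) has_vector_derivative v t + (- LB t) *v e t) (at t within {t0..})"
          by (rule has_vector_derivative_add[OF pd0[OF t0 t]]) (use ed t in auto)
        moreover have "v t + (- LB t) *v e t = F (p t + e t) (bearings src dst (p t)) (v t)"
          using LBp[of t] t t0 by (simp add: F_def LB_def[symmetric] neg_mv matrix_vector_right_distrib)
        ultimately show "((\<lambda>t. p t + e t) has_vector_derivative F (p t + e t) (bearings src dst (p t)) (v t)) (at t within {t0..})"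
          by simp
      qed
    next
      fix t0 :: real and x0 :: "real^('n \<times> 'd)" and x :: "real \<Rightarrow> real^('n \<times> 'd)"
      assume t0: "0 \<le> t0" and x0: "x t0 = x0"
        and xd: "\<forall>t\<ge>t0. (x has_vector_derivative F (x t) (bearings src dst (p t)) (v t)) (at t within {t0..})"
      define c0 where "c0 = avg (x0 - p t0)"
      define w where "w t = x t - (p t + ones_kron c0)" for t
      have xw: "x t = w t + p t + ones_kron c0" for t by (simp add: w_def)
      have wd: "\<forall>t\<ge>t0. (w has_vector_derivative -(LB t *v w t)) (at t within {t0..})"
      proof (intro allI impI)
        fix t assume t: "t0 \<le> t"
        have "(w has_vector_derivative F (x t) (bearings src dst (p t)) (v t) - (v t + 0)) (at t within {t0..})"
          unfolding w_def
          by (intro has_vector_derivative_diff has_vector_derivative_add has_vector_derivative_const pd0[OF t0 t])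
             (use xd t in auto)
        moreover have "F (x t) (bearings src dst (p t)) (v t) - (v t + 0) = -(LB t *v w t)"
          using LBp[of t] LBo[of t c0] t t0
          by (simp add: F_def LB_def[symmetric] xw matrix_vector_right_distrib)
        ultimately show "(w has_vector_derivative -(LB t *v w t)) (at t within {t0..})" by simp
      qed
      have w0: "w t0 = perp (x0 - p t0)" by (simp add: w_def x0 perp_def c0_def algebra_simps)
      have orth: "(\<Sum>i\<in>UNIV. w t $ (i,a)) = 0" if t: "t \<ge> t0" for t a
      proof -
        define u where "u = (ones_kron (axis a 1) :: real^('n \<times> 'd))"
        have d: "((\<lambda>s. w s \<bullet> u) has_vector_derivative 0) (at s within {t0..})" if s: "s \<ge> t0" for s
        proof -
          have "((\<lambda>s. w s \<bullet> u) has_vector_derivative (w s \<bullet> 0 + -(LB s *v w s) \<bullet> u)) (at s within {t0..})"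
            by (rule hvd_inner) (use wd s in auto)
          moreover have "w s \<bullet> 0 + -(LB s *v w s) \<bullet> u = 0"
            using LB_ones_inner[OF ne, where c="axis a 1" and g="bearings src dst (p s)" and w="w s"]
            by (simp add: u_def LB_def inner_commute)
          ultimately show ?thesis by simp
        qed
        have "((\<lambda>s. 0) has_integral (w t \<bullet> u - w t0 \<bullet> u)) {t0..t}"
          by (rule FTC_from[OF d order.refl t])
        then have "w t \<bullet> u - w t0 \<bullet> u = 0" using has_integral_0 has_integral_unique by blast
        moreover have "w t0 \<bullet> u = 0" unfolding u_def inner_ones_axis w0 by (rule sum_perp)
        ultimately have "w t \<bullet> u = 0" by simp
        then show ?thesis unfolding u_def inner_ones_axis .
      qed
      have wl: "\<forall>t\<ge>t0. l2 * (norm (w t))^2 \<le> (norm (H *v w t))^2"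
        using L2 orth by (simp add: H_def)
      have bnd: "\<forall>t\<ge>t0. norm (w t) \<le> \<kappa> * exp (- lam * (t - t0)) * norm (w t0)"
        using K t0 wd wl by blast
      show "\<exists>c. \<forall>t\<ge>t0. norm (x t - (p t + ones_kron c))
                  \<le> \<kappa> * exp (- lam * (t - t0)) * infdist (x0 - p t0) (range ones_kron)"
      proof (rule exI[of _ c0], intro allI impI)
        fix t assume t: "t0 \<le> t"
        have "norm (x t - (p t + ones_kron c0)) = norm (w t)" by (simp add: w_def)
        also have "\<dots> \<le> \<kappa> * exp (- lam * (t - t0)) * norm (w t0)" using bnd t by blast
        also have "\<dots> \<le> \<kappa> * exp (- lam * (t - t0)) * infdist (x0 - p t0) (range ones_kron)"
          unfolding w0 using \<kappa>p by (intro mult_left_mono infdist_ge) auto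
        finally show "norm (x t - (p t + ones_kron c0)) \<le> \<kappa> * exp (- lam * (t - t0)) * infdist (x0 - p t0) (range ones_kron)" .
      qed
    qed
  qed
qed

end
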